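(* Suppose that $S_N$ admits the weak global Edgeworth expansion of order $0$ for all $f\in F^1_0$, with leading polynomial $P_{0,g}\equiv1$ and asymptotic mean $A=0$, i.e. $\mathbb{E}(f(S_N))=\int\mathfrak{n}(z)f(z\sqrt{N})\,dz+C^1_0(f)\,o(N^{-1/2})$ with the $o$-term independent of $f$. Let $(u_N)$ be a real sequence with $\lim_{N\to\infty}u_N/\sqrt{N}=u$. Then for all $a<b$, $$\lim_{N\to\infty}\frac{\sqrt{N}}{b-a}\,\mathbb{P}\big(S_N\in(u_N+a,u_N+b)\big)=\frac{1}{\sqrt{2\pi\sigma^2}}e^{-\frac{u^2}{2\sigma^2}}.$$
   Context: $X_1,X_2,\dots$ are real random variables, $S_N=\sum_{n=1}^N X_n$, $\sigma^2>0$, $\mathfrak{n}(y)=\frac{1}{\sqrt{2\pi\sigma^2}}e^{-y^2/(2\sigma^2)}$. $F^1_0$ is the space of continuously differentiable $f:\mathbb{R}\to\mathbb{C}$ with $C^1_0(f)=\max(\|f\|_{L^1},\|f'\|_{L^1})+\|f\|_{L^1}<\infty$. The asymptotic mean $A=\lim_N\mathbb{E}(S_N/N)$ is assumed to be $0$. *)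

theory Defs
  imports "HOL-Probability.Probability"
begin

definition normal_dens :: "real \<Rightarrow> real \<Rightarrow> real" where
  "normal_dens sigma2 y = exp (- y\<^sup>2 / (2 * sigma2)) / sqrt (2 * pi * sigma2)"

definition F10 :: "(real \<Rightarrow> complex) \<Rightarrow> bool" where
  "F10 f \<longleftrightarrow> (\<forall>x. f differentiable (at x))
     \<and> continuous_on UNIV (\<lambda>x. vector_derivative f (at x))
     \<and> integrable lborel f
     \<and> integrable lborel (\<lambda>x. vector_derivative f (at x))"

definition C10 :: "(real \<Rightarrow> complex) \<Rightarrow> real" where
  "C10 f = max (\<integral>x. norm (f x) \<partial>lborel) (\<integral>x. norm (vector_derivative f (at x)) \<partial>lborel)
           + (\<integral>x. norm (f x) \<partial>lborel)"

end

theory Submission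
  imports Defs "HOL-Real_Asymp.Real_Asymp"
begin


definition clampf :: "real \<Rightarrow> real" where "clampf t = max 0 (min 1 t)"
definition qf :: "real \<Rightarrow> real" where "qf s = 3 * s^2 - 2 * s^3"
definition qf' :: "real \<Rightarrow> real" where "qf' s = 6 * s - 6 * s^2"
definition phi :: "real \<Rightarrow> real" where "phi t = qf (clampf t)"
definition phi' :: "real \<Rightarrow> real" where "phi' t = qf' (clampf t)"

lemma qf_deriv: "(qf has_real_derivative qf' s) (at s within A)"
  unfolding qf_def qf'_def
  by (auto intro!: derivative_eq_intros simp: power2_eq_square)

lemma phi_le0: "t \<le> 0 \<Longrightarrow> phi t = 0" and phi'_le0: "t \<le> 0 \<Longrightarrow> phi' t = 0"
  by (auto simp: phi_def phi'_def clampf_def qf_def qf'_def)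

lemma phi_ge1: "t \<ge> 1 \<Longrightarrow> phi t = 1" and phi'_ge1: "t \<ge> 1 \<Longrightarrow> phi' t = 0"
  by (auto simp: phi_def phi'_def clampf_def qf_def qf'_def)

lemma phi_mid: "0 \<le> t \<Longrightarrow> t \<le> 1 \<Longrightarrow> phi t = qf t"
  by (auto simp: phi_def clampf_def)

lemma phi'_mid: "0 \<le> t \<Longrightarrow> t \<le> 1 \<Longrightarrow> phi' t = qf' t"
  by (auto simp: phi'_def clampf_def)

lemma phi_bounds: "0 \<le> phi t" "phi t \<le> 1"
proof -
  define w where "w = clampf t"
  have w: "0 \<le> w" "w \<le> 1" by (auto simp: w_def clampf_def)
  have e1: "qf w = w^2 * (3 - 2 * w)" by (simp add: qf_def algebra_simps power2_eq_square power3_eq_cube)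
  have e2: "1 - qf w = (1 - w)^2 * (1 + 2 * w)" by (simp add: qf_def algebra_simps power2_eq_square power3_eq_cube)
  have "0 \<le> qf w" unfolding e1 using w by simp
  moreover have "0 \<le> 1 - qf w" unfolding e2 using w by simp
  ultimately show "0 \<le> phi t" "phi t \<le> 1" unfolding phi_def w_def[symmetric] by simp_all
qed

lemma cont_clampf: "continuous_on UNIV clampf"
  unfolding clampf_def by (intro continuous_intros)

lemma isCont_phi: "isCont phi t" and isCont_phi': "isCont phi' t"
  unfolding phi_def phi'_def qf_def qf'_def clampf_def by (intro continuous_intros)+

lemma deriv_split:
  fixes f :: "real \<Rightarrow> real"
  assumes "(f has_real_derivative D) (at x within {..x})" "(f has_real_derivative D) (at x within {x..})"
  shows "(f has_real_derivative D) (at x)"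
proof -
  have "((\<lambda>y. (f y - f x) / (y - x)) \<longlongrightarrow> D) (at x within ({..x} \<union> {x..}))"
    using assms unfolding has_field_derivative_iff by (intro Lim_Un)
  moreover have "{..x} \<union> {x..} = (UNIV::real set)" by auto
  ultimately show ?thesis unfolding has_field_derivative_iff by simp
qed

lemma phi_deriv: "(phi has_real_derivative phi' t) (at t)"
proof -
  consider "t < 0" | "t = 0" | "0 < t \<and> t < 1" | "t = 1" | "t > 1" by linarith
  then show ?thesis
  proof cases
    case 1
    then have "t \<le> 0" by simp
    have "((\<lambda>_. 0) has_real_derivative phi' t) (at t)" using \<open>t \<le> 0\<close> by (simp add: phi'_le0)
    then show ?thesis
      by (rule has_field_derivative_transform_within_open[where S="{..<0}"])
        (use 1 in \<open>auto simp: phi_le0 phi'_le0\<close>)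
  next
    case 3
    then have "0 \<le> t" "t \<le> 1" by simp_all
    have "(qf has_real_derivative phi' t) (at t)" using qf_deriv[of t] phi'_mid[of t] \<open>0 \<le> t\<close> \<open>t \<le> 1\<close> by simp
    then show ?thesis
      by (rule has_field_derivative_transform_within_open[where S="{0<..<1}"])
        (use 3 in \<open>auto simp: phi_mid phi'_mid\<close>)
  next
    case 5
    then have "t \<ge> 1" by simp
    have "((\<lambda>_. 1) has_real_derivative phi' t) (at t)" using \<open>t \<ge> 1\<close> by (simp add: phi'_ge1)
    then show ?thesis
      by (rule has_field_derivative_transform_within_open[where S="{1<..}"])
        (use 5 in \<open>auto simp: phi_ge1 phi'_ge1\<close>)
  next
    case 2
    then have "t \<le> 0" "0 \<le> t" "t \<le> 1" by simp_all
    show ?thesis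
    proof (rule deriv_split)
      have "((\<lambda>_. 0) has_real_derivative phi' t) (at t within {..t})" using \<open>t \<le> 0\<close> by (simp add: phi'_le0)
      then show "(phi has_real_derivative phi' t) (at t within {..t})"
        by (rule has_field_derivative_transform_within[where d=1])
          (use 2 in \<open>auto simp: phi_le0 phi'_le0\<close>)
      have "(qf has_real_derivative phi' t) (at t within {t..})" using qf_deriv[of t] phi'_mid[of t] \<open>0 \<le> t\<close> \<open>t \<le> 1\<close> by simp
      then show "(phi has_real_derivative phi' t) (at t within {t..})"
        by (rule has_field_derivative_transform_within[where d=1])
          (use 2 in \<open>auto simp: phi_mid phi'_mid dist_real_def\<close>)
    qed
  next
    case 4
    then have "t \<ge> 1" "0 \<le> t" "t \<le> 1" by simp_all
    show ?thesis
    proof (rule deriv_split)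
      have "(qf has_real_derivative phi' t) (at t within {..t})" using qf_deriv[of t] phi'_mid[of t] \<open>0 \<le> t\<close> \<open>t \<le> 1\<close> by simp
      then show "(phi has_real_derivative phi' t) (at t within {..t})"
        by (rule has_field_derivative_transform_within[where d=1])
          (use 4 in \<open>auto simp: phi_mid phi'_mid dist_real_def\<close>)
      have "((\<lambda>_. 1) has_real_derivative phi' t) (at t within {t..})" using \<open>t \<ge> 1\<close> by (simp add: phi'_ge1)
      then show "(phi has_real_derivative phi' t) (at t within {t..})"
        by (rule has_field_derivative_transform_within[where d=1])
          (use 4 in \<open>auto simp: phi_ge1 phi'_ge1\<close>)
    qed
  qed
qed


lemma normal_dens_bounds:
  assumes "sigma2 > 0"
  shows "0 \<le> normal_dens sigma2 y" "normal_dens sigma2 y \<le> 1 / sqrt (2 * pi * sigma2)"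
proof -
  have "exp (- y\<^sup>2 / (2 * sigma2)) \<le> 1" using assms by simp
  moreover have "sqrt (2 * pi * sigma2) > 0" using assms by simp
  ultimately show "0 \<le> normal_dens sigma2 y" "normal_dens sigma2 y \<le> 1 / sqrt (2 * pi * sigma2)"
    unfolding normal_dens_def by (auto simp: divide_right_mono)
qed

lemma isCont_normal_dens: "sigma2 > 0 \<Longrightarrow> isCont (normal_dens sigma2) y"
  unfolding normal_dens_def by (intro continuous_intros) auto

lemma main_lemma:
  fixes M :: "'a measure" and S :: "nat \<Rightarrow> 'a \<Rightarrow> real"
    and sigma2 :: real and uN :: "nat \<Rightarrow> real" and u :: real
    and G G' :: "real \<Rightarrow> real" and c d :: real
  assumes "prob_space M"
    and Smeas: "\<And>N. S N \<in> borel_measurable M"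
    and sigma_pos: "sigma2 > 0"
    and edgeworth: "\<exists>r :: nat \<Rightarrow> real. r \<longlonglongrightarrow> 0 \<and>
       (\<forall>f. F10 f \<longrightarrow> (\<forall>N\<ge>1.
          norm ((\<integral>\<omega>. f (S N \<omega>) \<partial>M)
                - (\<integral>z. complex_of_real (normal_dens sigma2 z) * f (z * sqrt (real N)) \<partial>lborel))
          \<le> C10 f * (r N / sqrt (real N))))"
    and u_lim: "(\<lambda>N. uN N / sqrt (real N)) \<longlonglongrightarrow> u"
    and G_der: "\<And>x. (G has_real_derivative G' x) (at x)"
    and G'_cont: "\<And>x. isCont G' x"
    and G_supp: "\<And>x. x \<notin> {c..d} \<Longrightarrow> G x = 0 \<and> G' x = 0"
  shows "(\<lambda>N. sqrt (real N) * (\<integral>\<omega>. G (S N \<omega> - uN N) \<partial>M))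
           \<longlonglongrightarrow> normal_dens sigma2 u * (\<integral>x. G x \<partial>lborel)"
proof -
  have G_cont: "isCont G x" for x using G_der DERIV_isCont by blast
  have contG: "continuous_on UNIV G" using G_cont continuous_at_imp_continuous_on by blast
  have contG': "continuous_on UNIV G'" using G'_cont continuous_at_imp_continuous_on by blast
  have Gmeas[measurable]: "G \<in> borel_measurable borel" using contG by (rule borel_measurable_continuous_onI)
  have ind_eq: "G x = indicator {c..d} x *\<^sub>R G x" for x using G_supp[of x] by (auto split: split_indicator)
  have ind_eq': "G' x = indicator {c..d} x *\<^sub>R G' x" for x using G_supp[of x] by (auto split: split_indicator)
  have "integrable lborel (\<lambda>x. indicator {c..d} x *\<^sub>R G x)"
    by (rule borel_integrable_compact) (auto intro: continuous_on_subset[OF contG])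
  moreover have "(\<lambda>x. indicator {c..d} x *\<^sub>R G x) = G" by (rule ext) (rule ind_eq[symmetric])
  ultimately have intG: "integrable lborel G" by simp
  have "integrable lborel (\<lambda>x. indicator {c..d} x *\<^sub>R G' x)"
    by (rule borel_integrable_compact) (auto intro: continuous_on_subset[OF contG'])
  moreover have "(\<lambda>x. indicator {c..d} x *\<^sub>R G' x) = G'" by (rule ext) (rule ind_eq'[symmetric])
  ultimately have intG': "integrable lborel G'" by simp
  define f where "f v = (\<lambda>x. complex_of_real (G (x - v)))" for v
  have vd: "(f v has_vector_derivative complex_of_real (G' (x - v))) (at x)" for v x
    unfolding f_def
  proof (intro has_vector_derivative_of_real)
    have "((\<lambda>x. x - v) has_real_derivative 1) (at x)" by (auto intro!: derivative_eq_intros)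
    from DERIV_chain2[OF G_der[of "x - v"] this] show "((\<lambda>x. G (x - v)) has_real_derivative G' (x - v)) (at x)"
      by simp
  qed
  have vd_eq: "vector_derivative (f v) (at x) = complex_of_real (G' (x - v))" for v x
    using vd by (rule vector_derivative_at)
  have F10f: "F10 (f v)" for v
    unfolding F10_def
  proof (intro conjI allI)
    show "f v differentiable at x" for x using vd by (rule differentiableI_vector)
    have "continuous_on UNIV (\<lambda>x. G' (x - v))"
      by (rule continuous_on_compose2[OF contG']) (auto intro: continuous_intros)
    then show "continuous_on UNIV (\<lambda>x. vector_derivative (f v) (at x))"
      unfolding vd_eq by (intro continuous_intros)
    show "integrable lborel (f v)" unfolding f_def
      using lborel_integrable_real_affine[OF intG, of 1 "- v"] by (intro integrable_of_real) simp
    show "integrable lborel (\<lambda>x. vector_derivative (f v) (at x))" unfolding vd_eq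
      using lborel_integrable_real_affine[OF intG', of 1 "- v"] by (intro integrable_of_real) simp
  qed
  define K where "K = max (\<integral>x. \<bar>G x\<bar> \<partial>lborel) (\<integral>x. \<bar>G' x\<bar> \<partial>lborel) + (\<integral>x. \<bar>G x\<bar> \<partial>lborel)"
  have C10f: "C10 (f v) = K" for v
  proof -
    have 1: "(\<integral>x. \<bar>G (x - v)\<bar> \<partial>lborel) = (\<integral>x. \<bar>G x\<bar> \<partial>lborel)"
      by (subst lborel_integral_real_affine[where c=1 and t=v]) simp_all
    have 2: "(\<integral>x. \<bar>G' (x - v)\<bar> \<partial>lborel) = (\<integral>x. \<bar>G' x\<bar> \<partial>lborel)"
      by (subst lborel_integral_real_affine[where c=1 and t=v]) simp_all
    show ?thesis unfolding C10_def K_def vd_eq by (simp add: f_def 1 2)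
  qed
  obtain r where r0: "r \<longlonglongrightarrow> 0" and rb: "\<And>f N. F10 f \<Longrightarrow> N \<ge> 1 \<Longrightarrow>
          norm ((\<integral>\<omega>. f (S N \<omega>) \<partial>M)
                - (\<integral>z. complex_of_real (normal_dens sigma2 z) * f (z * sqrt (real N)) \<partial>lborel))
          \<le> C10 f * (r N / sqrt (real N))"
    using edgeworth by blast
  define E where "E N = (\<integral>\<omega>. G (S N \<omega> - uN N) \<partial>M)" for N
  define I where "I N = (\<integral>z. normal_dens sigma2 z * G (z * sqrt (real N) - uN N) \<partial>lborel)" for N
  define J where "J N = (\<integral>x. normal_dens sigma2 ((x + uN N) / sqrt (real N)) * G x \<partial>lborel)" for N
  have EI: "\<bar>E N - I N\<bar> \<le> K * (r N / sqrt (real N))" if "N \<ge> 1" for N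
  proof -
    have "norm ((\<integral>\<omega>. f (uN N) (S N \<omega>) \<partial>M)
                - (\<integral>z. complex_of_real (normal_dens sigma2 z) * f (uN N) (z * sqrt (real N)) \<partial>lborel))
          \<le> K * (r N / sqrt (real N))" using rb[OF F10f that] by (simp add: C10f)
    moreover have "(\<integral>\<omega>. f (uN N) (S N \<omega>) \<partial>M) = complex_of_real (E N)"
      by (simp add: f_def E_def)
    moreover have "(\<integral>z. complex_of_real (normal_dens sigma2 z) * f (uN N) (z * sqrt (real N)) \<partial>lborel)
       = complex_of_real (I N)"
      unfolding f_def I_def of_real_mult[symmetric] by (rule integral_complex_of_real)
    ultimately show ?thesis by (simp del: of_real_diff add: of_real_diff[symmetric] norm_of_real)
  qed
  have IJ: "sqrt (real N) * I N = J N" if "N \<ge> 1" for N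
  proof -
    have sN: "sqrt (real N) > 0" using that by simp
    have "I N = \<bar>1 / sqrt (real N)\<bar> *\<^sub>R (\<integral>x. normal_dens sigma2 (uN N / sqrt (real N) + 1 / sqrt (real N) * x)
         * G ((uN N / sqrt (real N) + 1 / sqrt (real N) * x) * sqrt (real N) - uN N) \<partial>lborel)"
      unfolding I_def by (rule lborel_integral_real_affine) (use sN in simp)
    also have "\<dots> = (1 / sqrt (real N)) * J N"
    proof -
      have e1: "(uN N / sqrt (real N) + 1 / sqrt (real N) * x) * sqrt (real N) - uN N = x" for x
        using sN by (simp add: distrib_right)
      have e2: "uN N / sqrt (real N) + 1 / sqrt (real N) * x = (x + uN N) / sqrt (real N)" for x
        by (simp add: add_divide_distrib)
      show ?thesis unfolding J_def e1 e2 using sN by simp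
    qed
    finally show ?thesis using sN by simp
  qed
  have Jlim: "J \<longlonglongrightarrow> normal_dens sigma2 u * (\<integral>x. G x \<partial>lborel)"
  proof -
    have "(\<lambda>N. \<integral>x. normal_dens sigma2 ((x + uN N) / sqrt (real N)) * G x \<partial>lborel)
        \<longlonglongrightarrow> (\<integral>x. normal_dens sigma2 u * G x \<partial>lborel)"
    proof (rule integral_dominated_convergence[where w="\<lambda>x. 1 / sqrt (2 * pi * sigma2) * \<bar>G x\<bar>"])
      show "(\<lambda>x. normal_dens sigma2 u * G x) \<in> borel_measurable lborel" by measurable
      show "(\<lambda>x. normal_dens sigma2 ((x + uN N) / sqrt (real N)) * G x) \<in> borel_measurable lborel" for N
        unfolding normal_dens_def by measurable
      show "integrable lborel (\<lambda>x. 1 / sqrt (2 * pi * sigma2) * \<bar>G x\<bar>)"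
        using intG by (intro integrable_mult_right integrable_abs)
      show "AE x in lborel. norm (normal_dens sigma2 ((x + uN N) / sqrt (real N)) * G x)
          \<le> 1 / sqrt (2 * pi * sigma2) * \<bar>G x\<bar>" for N
      proof (intro AE_I2)
        fix x
        have "\<bar>normal_dens sigma2 ((x + uN N) / sqrt (real N))\<bar> \<le> 1 / sqrt (2 * pi * sigma2)"
          using normal_dens_bounds[OF sigma_pos] by simp
        then show "norm (normal_dens sigma2 ((x + uN N) / sqrt (real N)) * G x) \<le> 1 / sqrt (2 * pi * sigma2) * \<bar>G x\<bar>"
          unfolding real_norm_def abs_mult by (rule mult_right_mono) simp
      qed
      show "AE x in lborel. (\<lambda>N. normal_dens sigma2 ((x + uN N) / sqrt (real N)) * G x)
          \<longlonglongrightarrow> normal_dens sigma2 u * G x"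
      proof (intro AE_I2 tendsto_mult_right)
        fix x
        have "(\<lambda>N. 1 / sqrt (real N)) \<longlonglongrightarrow> 0" by real_asymp
        then have "(\<lambda>N. x * (1 / sqrt (real N)) + uN N / sqrt (real N)) \<longlonglongrightarrow> x * 0 + u"
          by (intro tendsto_intros u_lim)
        then have "(\<lambda>N. (x + uN N) / sqrt (real N)) \<longlonglongrightarrow> u" by (simp add: add_divide_distrib)
        then show "(\<lambda>N. normal_dens sigma2 ((x + uN N) / sqrt (real N))) \<longlonglongrightarrow> normal_dens sigma2 u"
          by (rule isCont_tendsto_compose[OF isCont_normal_dens[OF sigma_pos]])
      qed
    qed
    then show ?thesis unfolding J_def by simp
  qed
  have diff0: "(\<lambda>N. sqrt (real N) * E N - J N) \<longlonglongrightarrow> 0"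
  proof (rule Lim_null_comparison)
    show "\<forall>\<^sub>F N in sequentially. norm (sqrt (real N) * E N - J N) \<le> \<bar>K\<bar> * \<bar>r N\<bar>"
      using eventually_ge_at_top[of "1::nat"]
    proof eventually_elim
      case (elim N)
      have sN: "sqrt (real N) > 0" using elim by simp
      have "norm (sqrt (real N) * E N - J N) = sqrt (real N) * \<bar>E N - I N\<bar>"
      proof -
        have "sqrt (real N) * E N - J N = sqrt (real N) * (E N - I N)"
          using IJ[OF elim] by (simp add: right_diff_distrib)
        then show ?thesis using sN by (simp add: abs_mult)
      qed
      also have "\<dots> \<le> sqrt (real N) * (K * (r N / sqrt (real N)))"
        using EI[OF elim] sN by (intro mult_left_mono) auto
      also have "\<dots> = K * r N" using sN by simp
      also have "\<dots> \<le> \<bar>K\<bar> * \<bar>r N\<bar>" by (metis abs_ge_self abs_mult)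
      finally show ?case .
    qed
    show "(\<lambda>N. \<bar>K\<bar> * \<bar>r N\<bar>) \<longlonglongrightarrow> 0"
      using tendsto_mult_right_zero[OF tendsto_rabs_zero[OF r0], of "\<bar>K\<bar>"] by simp
  qed
  have "(\<lambda>N. (sqrt (real N) * E N - J N) + J N) \<longlonglongrightarrow> 0 + normal_dens sigma2 u * (\<integral>x. G x \<partial>lborel)"
    by (intro tendsto_add diff0 Jlim)
  then show ?thesis unfolding E_def by simp
qed


definition bump :: "real \<Rightarrow> real \<Rightarrow> real \<Rightarrow> real \<Rightarrow> real" where
  "bump c d e x = phi ((x - c) / e) * phi ((d - x) / e)"
definition bump' :: "real \<Rightarrow> real \<Rightarrow> real \<Rightarrow> real \<Rightarrow> real" where
  "bump' c d e x = phi' ((x - c) / e) / e * phi ((d - x) / e) - phi ((x - c) / e) * (phi' ((d - x) / e) / e)"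

lemma bump_der: "e > 0 \<Longrightarrow> (bump c d e has_real_derivative bump' c d e x) (at x)"
proof -
  assume "e > 0"
  have h1: "((\<lambda>x. (x - c) / e) has_real_derivative 1 / e) (at x)" using \<open>e > 0\<close> by (auto intro!: derivative_eq_intros)
  have h2: "((\<lambda>x. (d - x) / e) has_real_derivative - 1 / e) (at x)" using \<open>e > 0\<close> by (auto intro!: derivative_eq_intros)
  have d1: "((\<lambda>x. phi ((x - c) / e)) has_real_derivative phi' ((x - c) / e) * (1 / e)) (at x)"
    by (rule DERIV_chain2[OF phi_deriv h1])
  have d2: "((\<lambda>x. phi ((d - x) / e)) has_real_derivative phi' ((d - x) / e) * (- 1 / e)) (at x)"
    by (rule DERIV_chain2[OF phi_deriv h2])
  from DERIV_mult[OF d1 d2] show ?thesis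
    unfolding bump_def[abs_def] bump'_def by (simp add: algebra_simps)
qed

lemma bump_cont: "e > 0 \<Longrightarrow> isCont (bump' c d e) x"
  unfolding bump'_def[abs_def]
  by (intro continuous_intros isCont_o2[OF _ isCont_phi] isCont_o2[OF _ isCont_phi']) auto

lemma bump_supp: "e > 0 \<Longrightarrow> x \<notin> {c..d} \<Longrightarrow> bump c d e x = 0 \<and> bump' c d e x = 0"
proof -
  assume e: "e > 0" and x: "x \<notin> {c..d}"
  then consider "(x - c) / e \<le> 0" | "(d - x) / e \<le> 0"
    by (auto simp: divide_nonpos_pos)
  then show ?thesis
    by cases (simp_all add: bump_def bump'_def phi_le0 phi'_le0)
qed

lemma bump_bounds: "0 \<le> bump c d e x" "bump c d e x \<le> 1"
  unfolding bump_def using phi_bounds by (auto intro: mult_nonneg_nonneg mult_le_one)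

lemma bump_one: "e > 0 \<Longrightarrow> c + e \<le> x \<Longrightarrow> x \<le> d - e \<Longrightarrow> bump c d e x = 1"
  unfolding bump_def by (simp add: phi_ge1)

lemma bump_zero: "e > 0 \<Longrightarrow> x \<notin> {c<..<d} \<Longrightarrow> bump c d e x = 0"
proof -
  assume e: "e > 0" and x: "x \<notin> {c<..<d}"
  then consider "(x - c) / e \<le> 0" | "(d - x) / e \<le> 0"
    by (auto simp: divide_nonpos_pos)
  then show ?thesis by cases (simp_all add: bump_def phi_le0)
qed

lemma bump_integrable: "e > 0 \<Longrightarrow> integrable lborel (bump c d e)"
proof -
  assume e: "e > 0"
  have cont: "continuous_on UNIV (bump c d e)"
    using bump_der[OF e] DERIV_isCont continuous_at_imp_continuous_on by blast
  have "integrable lborel (\<lambda>x. indicator {c..d} x *\<^sub>R bump c d e x)"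
    by (rule borel_integrable_compact) (auto intro: continuous_on_subset[OF cont])
  moreover have "(\<lambda>x. indicator {c..d} x *\<^sub>R bump c d e x) = bump c d e"
    using bump_supp[OF e] by (auto simp: fun_eq_iff split: split_indicator)
  ultimately show ?thesis by simp
qed


theorem corollary5p2:
  fixes M :: "'a measure" and X :: "nat \<Rightarrow> 'a \<Rightarrow> real" and S :: "nat \<Rightarrow> 'a \<Rightarrow> real"
    and sigma2 :: real and uN :: "nat \<Rightarrow> real" and u a b :: real
  assumes "prob_space M"
    and meas: "\<And>n. X n \<in> borel_measurable M"
    and S_def: "\<And>N. S N = (\<lambda>\<omega>. \<Sum>n\<in>{1..N}. X n \<omega>)"
    and sigma_pos: "sigma2 > 0"
    and edgeworth: "\<exists>r :: nat \<Rightarrow> real. r \<longlonglongrightarrow> 0 \<and>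
       (\<forall>f. F10 f \<longrightarrow> (\<forall>N\<ge>1.
          norm ((\<integral>\<omega>. f (S N \<omega>) \<partial>M)
                - (\<integral>z. complex_of_real (normal_dens sigma2 z) * f (z * sqrt (real N)) \<partial>lborel))
          \<le> C10 f * (r N / sqrt (real N))))"
    and u_lim: "(\<lambda>N. uN N / sqrt (real N)) \<longlonglongrightarrow> u"
    and ab: "a < b"
  shows "(\<lambda>N. sqrt (real N) / (b - a) *
            measure M {\<omega> \<in> space M. S N \<omega> \<in> {uN N + a <..< uN N + b}})
         \<longlonglongrightarrow> normal_dens sigma2 u"
proof -
  interpret prob_space M by fact
  have Smeas[measurable]: "S N \<in> borel_measurable M" for N
    unfolding S_def by (rule borel_measurable_sum) (rule meas)
  define L where "L = normal_dens sigma2 u"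
  have Lpos: "L > 0" unfolding L_def normal_dens_def using sigma_pos by simp
  define P where "P N = measure M {\<omega> \<in> space M. S N \<omega> \<in> {uN N + a <..< uN N + b}}" for N
  define E where "E c d e N = (\<integral>\<omega>. bump c d e (S N \<omega> - uN N) \<partial>M)" for c d e N
  have lim: "(\<lambda>N. sqrt (real N) * E c d e N / (b - a)) \<longlonglongrightarrow> L * (\<integral>x. bump c d e x \<partial>lborel) / (b - a)"
    if e: "e > 0" for c d e
  proof -
    have "(\<lambda>N. sqrt (real N) * E c d e N) \<longlonglongrightarrow> L * (\<integral>x. bump c d e x \<partial>lborel)"
      unfolding E_def L_def
      by (rule main_lemma[OF \<open>prob_space M\<close> Smeas sigma_pos edgeworth u_lim bump_der[OF e] bump_cont[OF e] bump_supp[OF e]])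
    then show ?thesis using ab by (intro tendsto_divide tendsto_const) auto
  qed
  have bump_meas[measurable]: "bump c d e \<in> borel_measurable borel" if "e > 0" for c d e
  proof -
    have "continuous_on UNIV (bump c d e)"
      using bump_der[OF that] DERIV_isCont continuous_at_imp_continuous_on by blast
    then show ?thesis by (rule borel_measurable_continuous_onI)
  qed
  have intE: "integrable M (\<lambda>\<omega>. bump c d e (S N \<omega> - uN N))" if "e > 0" for c d e N
  proof (rule integrable_const_bound[where B=1])
    show "AE x in M. norm (bump c d e (S N x - uN N)) \<le> 1"
      using bump_bounds by (intro AE_I2) simp
    show "(\<lambda>\<omega>. bump c d e (S N \<omega> - uN N)) \<in> borel_measurable M"
      using bump_meas[OF that] by measurable
  qed
  have Pind: "P N = (\<integral>\<omega>. indicator {\<omega> \<in> space M. S N \<omega> \<in> {uN N + a <..< uN N + b}} \<omega> \<partial>M)" for N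
    unfolding P_def by (simp add: Int_absorb2)
  have intP: "integrable M (indicator {\<omega> \<in> space M. S N \<omega> \<in> {uN N + a <..< uN N + b}} :: _ \<Rightarrow> real)" for N
    by (intro integrable_real_indicator) (auto simp: less_top[symmetric])
  have lower: "E a b e N \<le> P N" if "e > 0" for e N
    unfolding Pind E_def
    by (rule integral_mono[OF intE[OF that] intP])
       (use bump_bounds bump_zero[OF that] in \<open>auto split: split_indicator\<close>)
  have upper: "P N \<le> E (a - e) (b + e) e N" if "e > 0" for e N
    unfolding Pind E_def
    by (rule integral_mono[OF intP intE[OF that]])
       (use bump_bounds bump_one[OF that] in \<open>auto split: split_indicator\<close>)
  have int_lower: "b - a - 2 * e \<le> (\<integral>x. bump a b e x \<partial>lborel)" if "e > 0" "2 * e \<le> b - a" for e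
  proof -
    have "(\<integral>x. indicator {a + e .. b - e} x \<partial>lborel) \<le> (\<integral>x. bump a b e x \<partial>lborel)"
      by (rule integral_mono[OF integrable_real_indicator bump_integrable[OF that(1)]])
         (use bump_bounds bump_one[OF that(1)] in \<open>auto split: split_indicator simp: emeasure_lborel_Icc_eq\<close>)
    then show ?thesis using that by simp
  qed
  have int_upper: "(\<integral>x. bump (a - e) (b + e) e x \<partial>lborel) \<le> b - a + 2 * e" if "e > 0" for e
  proof -
    have "(\<integral>x. bump (a - e) (b + e) e x \<partial>lborel) \<le> (\<integral>x. indicator {a - e .. b + e} x \<partial>lborel)"
      by (rule integral_mono[OF bump_integrable[OF that(1)] integrable_real_indicator])
         (use bump_bounds bump_supp[OF that(1)] in \<open>auto split: split_indicator simp: emeasure_lborel_Icc_eq\<close>)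
    then show ?thesis using that ab by simp
  qed
  have ba: "b - a > 0" using ab by simp
  have pN_lo: "sqrt (real N) * E a b e N / (b - a) \<le> sqrt (real N) / (b - a) * P N" if "e > 0" for e N
    using mult_left_mono[OF lower[OF that, of N], of "sqrt (real N) / (b - a)"] ba by simp
  have pN_hi: "sqrt (real N) / (b - a) * P N \<le> sqrt (real N) * E (a - e) (b + e) e N / (b - a)" if "e > 0" for e N
    using mult_left_mono[OF upper[OF that, of N], of "sqrt (real N) / (b - a)"] ba by simp
  show ?thesis
    unfolding L_def[symmetric] P_def[symmetric]
  proof (rule order_tendstoI)
    fix y assume y: "y < L"
    define e where "e = min ((b - a) / 4) ((L - y) * (b - a) / (4 * L))"
    have e1: "e \<le> (b - a) / 4" "e \<le> (L - y) * (b - a) / (4 * L)" unfolding e_def by (rule min.cobounded1, rule min.cobounded2)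
    have e: "e > 0" "2 * e \<le> b - a" "e \<le> (L - y) * (b - a) / (4 * L)"
      using e1 ba unfolding e_def using ba y Lpos by auto
    have "e * (4 * L) \<le> (L - y) * (b - a)"
      using e(3) Lpos by (simp add: pos_le_divide_eq)
    moreover have "(L - y) * (b - a) > 0" using y ba by simp
    moreover have "L * (b - a - 2 * e) - y * (b - a) = (L - y) * (b - a) - 2 * (e * L)"
      by (simp add: algebra_simps)
    ultimately have "L * (b - a - 2 * e) > y * (b - a)" by linarith
    moreover have "L * (b - a - 2 * e) \<le> L * (\<integral>x. bump a b e x \<partial>lborel)"
      using int_lower[OF e(1,2)] Lpos by simp
    ultimately have "y < L * (\<integral>x. bump a b e x \<partial>lborel) / (b - a)"
      using ba by (simp add: field_simps)
    from order_tendstoD(1)[OF lim[OF e(1)] this]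
    show "\<forall>\<^sub>F N in sequentially. y < sqrt (real N) / (b - a) * P N"
      by eventually_elim (use pN_lo[OF e(1)] in \<open>auto intro: less_le_trans\<close>)
  next
    fix y assume y: "y > L"
    define e where "e = (y - L) * (b - a) / (4 * L)"
    have e: "e > 0" unfolding e_def using ba y Lpos by auto
    have "e * (4 * L) = (y - L) * (b - a)"
      unfolding e_def using Lpos by simp
    moreover have "(y - L) * (b - a) > 0" using y ba by simp
    moreover have "y * (b - a) - L * (b - a + 2 * e) = (y - L) * (b - a) - 2 * (e * L)"
      by (simp add: algebra_simps)
    ultimately have "L * (b - a + 2 * e) < y * (b - a)" by linarith
    moreover have "L * (\<integral>x. bump (a - e) (b + e) e x \<partial>lborel) \<le> L * (b - a + 2 * e)"
      using int_upper[OF e] Lpos by simp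
    ultimately have "L * (\<integral>x. bump (a - e) (b + e) e x \<partial>lborel) / (b - a) < y"
      using ba by (simp add: field_simps)
    from order_tendstoD(2)[OF lim[OF e] this]
    show "\<forall>\<^sub>F N in sequentially. sqrt (real N) / (b - a) * P N < y"
      by eventually_elim (use pN_hi[OF e] in \<open>auto intro: le_less_trans\<close>)
  qed
qed

end
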